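(* Let $m\in\mathbb{N}$, let $\mathbb{R}^m$ carry a norm, let $\mathcal{Y}\subseteq\mathbb{R}^m$ be bounded and let $\mathfrak{C}$ be a simplicial cover of $\mathcal{Y}$. Let $\{g_{\boldsymbol{v}}:\boldsymbol{v}\in V(\mathfrak{C})\}$ be the barycentric vertex interpolation function set for $\mathfrak{C}$, let $\{g_1,\ldots,g_k\}$ be obtained by removing one function from it, and let $\boldsymbol{g}:\mathcal{Y}\to\mathbb{R}^k$, $\boldsymbol{g}(\boldsymbol{x}):=(g_1(\boldsymbol{x}),\ldots,g_k(\boldsymbol{x}))^\top$. Assume $\operatorname{int}(\mathcal{Y})\cap\operatorname{int}(C)\ne\emptyset$ for all $C\in\mathfrak{C}$. Then there exist $\boldsymbol{x}_1,\ldots,\boldsymbol{x}_{k+1}\in\mathcal{Y}$ such that $\boldsymbol{g}(\boldsymbol{x}_1),\ldots,\boldsymbol{g}(\boldsymbol{x}_{k+1})$ are affinely independent.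
   Context: Faces: a convex $C'\subseteq C$ is a face of convex $C$ if $\lambda x_1+(1-\lambda)x_2\in C'$ ($0<\lambda<1$, $x_1,x_2\in C$) implies $x_1,x_2\in C'$; $V(C)$ is the set of extreme points. A simplicial cover of a bounded $\mathcal{Y}\subseteq\mathbb{R}^m$ is a finite collection $\mathfrak{C}$ of $m$-simplices whose union contains $\mathcal{Y}$ such that any two members with non-empty intersection intersect in a face of both. $\mathfrak{F}(\mathfrak{C})$: non-empty faces of members; $V(\mathfrak{C}):=\bigcup_{C}V(C)$. Every point $\boldsymbol{x}\in\bigcup_{C\in\mathfrak{C}}C$ lies in $\operatorname{relint}(F)$ for a unique $F\in\mathfrak{F}(\mathfrak{C})$ and has a unique representation $\boldsymbol{x}=\sum_{\boldsymbol{w}\in V(F)}\lambda^F_{\boldsymbol{w}}(\boldsymbol{x})\boldsymbol{w}$ with positive weights summing to $1$; the barycentric vertex interpolation function set is defined by $g_{\boldsymbol{v}}(\boldsymbol{x}):=\lambda^F_{\boldsymbol{v}}(\boldsymbol{x})$ if $\boldsymbol{v}\in V(F)$ and $g_{\boldsymbol{v}}(\boldsymbol{x}):=0$ otherwise, for $\boldsymbol{v}\in V(\mathfrak{C})$. *)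

theory Defs
  imports "HOL-Analysis.Analysis"
begin

definition simplicial_cover :: "'a::euclidean_space set set \<Rightarrow> 'a set \<Rightarrow> bool" where
  "simplicial_cover CC Y \<longleftrightarrow>
     finite CC \<and> (\<forall>C\<in>CC. int DIM('a) simplex C) \<and> Y \<subseteq> \<Union>CC \<and>
     (\<forall>C\<in>CC. \<forall>D\<in>CC. C \<inter> D \<noteq> {} \<longrightarrow> (C \<inter> D) face_of C \<and> (C \<inter> D) face_of D)"

definition cover_faces :: "'a::euclidean_space set set \<Rightarrow> 'a set set" where
  "cover_faces CC = {F. F \<noteq> {} \<and> (\<exists>C\<in>CC. F face_of C)}"

definition extreme_points :: "'a::real_vector set \<Rightarrow> 'a set" where
  "extreme_points C = {v. v extreme_point_of C}"

definition cover_vertices :: "'a::euclidean_space set set \<Rightarrow> 'a set" where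
  "cover_vertices CC = (\<Union>C\<in>CC. extreme_points C)"

text \<open>The barycentric vertex interpolation function g_v: for x, take the unique
  face F of the cover with x in relint F and the unique positive barycentric weights
  of x w.r.t. V(F); g_v(x) is the weight of v if v is a vertex of F, else 0.
  (The weight function is normalized to be 0 off V(F), so the value at v is
  exactly as in the paper.)\<close>
definition bary_interp :: "'a::euclidean_space set set \<Rightarrow> 'a \<Rightarrow> 'a \<Rightarrow> real" where
  "bary_interp CC v x =
     (let F = (THE F. F \<in> cover_faces CC \<and> x \<in> rel_interior F);
          lam = (THE lam. (\<forall>w\<in>extreme_points F. lam w > 0) \<and>
                          (\<forall>w. w \<notin> extreme_points F \<longrightarrow> lam w = 0) \<and>
                          (\<Sum>w\<in>extreme_points F. lam w) = 1 \<and>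
                          (\<Sum>w\<in>extreme_points F. lam w *\<^sub>R w) = x)
      in lam v)"

text \<open>Affine independence of a finite family p_1,...,p_n of points of R^I, where a
  point is given by its coordinates p i j, j \<in> I.\<close>
definition affinely_independent_family :: "nat \<Rightarrow> (nat \<Rightarrow> 'b \<Rightarrow> real) \<Rightarrow> 'b set \<Rightarrow> bool" where
  "affinely_independent_family n p I \<longleftrightarrow>
     (\<forall>c::nat \<Rightarrow> real. (\<Sum>i=1..n. c i) = 0 \<and> (\<forall>j\<in>I. (\<Sum>i=1..n. c i * p i j) = 0)
        \<longrightarrow> (\<forall>i\<in>{1..n}. c i = 0))"

end

theory Submission
  imports Defs "HOL-Library.Function_Algebras"
begin

definition fscale :: "real \<Rightarrow> ('a \<Rightarrow> real) \<Rightarrow> ('a \<Rightarrow> real)" where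
  "fscale r f = (\<lambda>x. r * f x)"

interpretation fv: vector_space fscale
  by unfold_locales (auto simp: fscale_def plus_fun_def algebra_simps)

lemma sum_fun_apply: "(sum f A) x = (\<Sum>a\<in>A. f a x)" for f :: "'b \<Rightarrow> 'a \<Rightarrow> real"
  by (induction A rule: infinite_finite_induct) (auto simp: plus_fun_def zero_fun_def)

definition unitv :: "'a \<Rightarrow> 'a \<Rightarrow> real" where "unitv v = (\<lambda>w. if w = v then 1 else 0)"

lemma unitv_indep: "fv.independent (unitv ` V)"
proof -
  have "fv.independent (unitv ` V)"
    unfolding fv.independent_explicit_finite_subsets
  proof (intro allI impI ballI)
    fix S u v assume S: "S \<subseteq> unitv ` V" "finite S" and eq: "(\<Sum>v\<in>S. fscale (u v) v) = 0" and v: "v \<in> S"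
    then obtain a where a: "v = unitv a" by auto
    have "0 = (\<Sum>w\<in>S. fscale (u w) w) a" using eq by (simp add: zero_fun_def)
    also have "\<dots> = (\<Sum>w\<in>S. u w * w a)" by (simp add: sum_fun_apply fscale_def)
    also have "\<dots> = (\<Sum>w\<in>S. if w = v then u w else 0)"
    proof (rule sum.cong[OF refl])
      fix w assume "w \<in> S"
      then obtain b where "w = unitv b" using S by auto
      then show "u w * w a = (if w = v then u w else 0)" using a
        by (auto simp: unitv_def fun_eq_iff)
    qed
    also have "\<dots> = u v" using v S by simp
    finally show "u v = 0" by simp
  qed
  then show ?thesis .
qed

lemma unitv_inj: "inj unitv"
  by (auto simp: inj_def unitv_def fun_eq_iff split: if_splits)

lemma extract_basis:
  assumes "finite V" "\<And>v. v \<in> V \<Longrightarrow> unitv v \<in> fv.span S"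
  shows "\<exists>B. B \<subseteq> S \<and> finite B \<and> card B = card V \<and> fv.independent B"
proof -
  obtain B0 where B0: "B0 \<subseteq> S" "fv.independent B0" "S \<subseteq> fv.span B0"
    using fv.maximal_independent_subset by blast
  have sp: "unitv ` V \<subseteq> fv.span B0"
    using assms(2) B0(3) by (metis fv.span_mono fv.span_span image_subsetI subsetD)
  have "\<exists>B. B \<subseteq> B0 \<and> card B = card V \<and> finite B"
  proof (cases "finite B0")
    case True
    have "card (unitv ` V) \<le> card B0"
      using fv.independent_span_bound[OF True unitv_indep sp] by simp
    then have "card V \<le> card B0" using card_image[OF inj_on_subset[OF unitv_inj]] by (metis subset_UNIV)
    then show ?thesis using obtain_subset_with_card_n by metis
  next
    case False
    then show ?thesis using infinite_arbitrarily_large by metis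
  qed
  then obtain B where "B \<subseteq> B0" "card B = card V" "finite B" by blast
  then show ?thesis using B0 fv.independent_mono by blast
qed

definition bcp :: "'a::euclidean_space set \<Rightarrow> 'a \<Rightarrow> ('a \<Rightarrow> real) \<Rightarrow> bool" where
  "bcp T x lam \<longleftrightarrow> (\<forall>w\<in>T. lam w > 0) \<and> (\<forall>w. w \<notin> T \<longrightarrow> lam w = 0) \<and>
     (\<Sum>w\<in>T. lam w) = 1 \<and> (\<Sum>w\<in>T. lam w *\<^sub>R w) = x"

lemma bcp_unique:
  assumes T: "\<not> affine_dependent T" and l1: "bcp T x l1" and l2: "bcp T x l2"
  shows "l1 = l2"
proof -
  have fin: "finite T" using T aff_independent_finite by blast
  define U where "U w = l1 w - l2 w" for w
  have s0: "sum U T = 0" using l1 l2 by (simp add: bcp_def U_def sum_subtractf)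
  have c0: "(\<Sum>w\<in>T. U w *\<^sub>R w) = 0" using l1 l2
    by (simp add: bcp_def U_def scaleR_diff_left sum_subtractf)
  have "\<forall>v\<in>T. U v = 0" using T s0 c0 affine_dependent_explicit_finite[OF fin] by blast
  then show ?thesis using l1 l2 unfolding bcp_def U_def fun_eq_iff by (metis eq_iff_diff_eq_0)
qed

lemma bcp_exists:
  assumes T: "\<not> affine_dependent T" and x: "x \<in> rel_interior (convex hull T)"
  shows "bcp T x (THE lam. bcp T x lam)"
proof -
  obtain u where u: "\<forall>w\<in>T. 0 < u w" "sum u T = 1" "(\<Sum>w\<in>T. u w *\<^sub>R w) = x"
    using x rel_interior_convex_hull_explicit[OF T] by auto
  define l where "l w = (if w \<in> T then u w else 0)" for w
  have "bcp T x l" using u unfolding bcp_def l_def by (simp cong: sum.cong)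
  have "(THE lam. bcp T x lam) = l" by (rule the_equality) (use \<open>bcp T x l\<close> bcp_unique[OF T] in auto)
  then show ?thesis using \<open>bcp T x l\<close> by simp
qed

lemma face_unique:
  assumes cov: "simplicial_cover CC Y" and C: "C \<in> CC" and x: "x \<in> interior C"
  shows "(THE F. F \<in> cover_faces CC \<and> x \<in> rel_interior F) = C"
proof (rule the_equality)
  have cvx: "convex C" using cov C unfolding simplicial_cover_def simplex_def
    by (metis convex_convex_hull)
  have ri: "rel_interior C = interior C" using x rel_interior_nonempty_interior by blast
  have "C \<noteq> {}" using x interior_subset by blast
  then show "C \<in> cover_faces CC \<and> x \<in> rel_interior C"
    using C x ri face_of_refl[OF cvx] unfolding cover_faces_def by auto
  fix F assume F: "F \<in> cover_faces CC \<and> x \<in> rel_interior F"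
  then obtain C' where C': "C' \<in> CC" "F face_of C'" unfolding cover_faces_def by blast
  have xF: "x \<in> F" using F rel_interior_subset by blast
  have xC: "x \<in> C" using x interior_subset by blast
  have FC': "F \<subseteq> C'" using C'(2) face_of_imp_subset by blast
  have xC': "x \<in> C'" using xF FC' by blast
  have ne: "C \<inter> C' \<noteq> {}" using xC xC' by blast
  have D1: "(C \<inter> C') face_of C" "(C \<inter> C') face_of C'"
    using cov C C'(1) ne unfolding simplicial_cover_def by auto
  have "C \<inter> C' = C"
  proof (rule ccontr)
    assume "C \<inter> C' \<noteq> C"
    then have "(C \<inter> C') \<inter> rel_interior C = {}" by (rule face_of_disjoint_rel_interior[OF D1(1)])
    then show False using xC xC' x ri by blast
  qed
  then have CC': "C \<subseteq> C'" by blast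
  have "(F \<inter> (C \<inter> C')) face_of C'" using face_of_Int[OF C'(2) D1(2)] .
  then have FI: "(F \<inter> (C \<inter> C')) face_of F" by (rule face_of_subset) (use FC' in auto)
  have "F \<inter> (C \<inter> C') = F"
  proof (rule ccontr)
    assume "F \<inter> (C \<inter> C') \<noteq> F"
    then have "(F \<inter> (C \<inter> C')) \<inter> rel_interior F = {}" by (rule face_of_disjoint_rel_interior[OF FI])
    moreover have "x \<in> (F \<inter> (C \<inter> C')) \<inter> rel_interior F" using xC xC' xF F by simp
    ultimately show False by simp
  qed
  then have "F \<subseteq> C" using Int_lower1[of C C'] Int_lower2[of F "C \<inter> C'"] by simp
  then have FC: "F face_of C" using face_of_subset[OF C'(2) _ CC'] by simp
  show "F = C"
  proof (rule ccontr)
    assume "F \<noteq> C"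
    then have "F \<inter> rel_interior C = {}" by (rule face_of_disjoint_rel_interior[OF FC])
    moreover have "x \<in> F \<inter> rel_interior C" using xF x ri by simp
    ultimately show False by simp
  qed
qed

lemma bary_interior:
  assumes cov: "simplicial_cover CC Y" and C: "C \<in> CC" and T: "\<not> affine_dependent T"
    and CT: "C = convex hull T" and x: "x \<in> interior C"
  shows "extreme_points C = T" "bcp T x (\<lambda>v. bary_interp CC v x)"
proof -
  show E: "extreme_points C = T"
    using extreme_point_of_convex_hull_affine_independent[OF T] CT
    unfolding extreme_points_def by auto
  have ri: "x \<in> rel_interior (convex hull T)" using x rel_interior_nonempty_interior CT by blast
  have "(\<lambda>v. bary_interp CC v x) = (THE lam. bcp T x lam)"
    unfolding bary_interp_def Let_def face_unique[OF cov C x] E bcp_def by simp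
  then show "bcp T x (\<lambda>v. bary_interp CC v x)" using bcp_exists[OF T ri] by simp
qed


lemma bcp_segment:
  assumes l: "bcp T p l" and w: "w \<in> T" and t: "0 < t" "t < 1" and fin: "finite T"
  shows "bcp T ((1 - t) *\<^sub>R p + t *\<^sub>R w) (\<lambda>v. (1 - t) * l v + t * unitv w v)"
proof -
  have s1: "(\<Sum>v\<in>T. unitv w v) = 1" using w fin by (simp add: unitv_def)
  have "(\<Sum>v\<in>T. unitv w v *\<^sub>R v) = (\<Sum>v\<in>T. if v = w then v else 0)"
    by (rule sum.cong) (auto simp: unitv_def)
  then have s2: "(\<Sum>v\<in>T. unitv w v *\<^sub>R v) = w" using w fin by simp
  have pos: "\<forall>v\<in>T. 0 < (1 - t) * l v + t * unitv w v"
  proof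
    fix v assume "v \<in> T"
    then have "0 < (1 - t) * l v" using l t unfolding bcp_def by simp
    moreover have "0 \<le> t * unitv w v" using t by (simp add: unitv_def)
    ultimately show "0 < (1 - t) * l v + t * unitv w v" by linarith
  qed
  have z: "\<forall>v. v \<notin> T \<longrightarrow> (1 - t) * l v + t * unitv w v = 0"
    using l w unfolding bcp_def unitv_def by auto
  have s: "(\<Sum>v\<in>T. (1 - t) * l v + t * unitv w v) = 1"
    using l s1 unfolding bcp_def by (simp add: sum.distrib sum_distrib_left[symmetric])
  have c: "(\<Sum>v\<in>T. ((1 - t) * l v + t * unitv w v) *\<^sub>R v) = (1 - t) *\<^sub>R p + t *\<^sub>R w"
  proof -
    have a: "(\<Sum>v\<in>T. ((1 - t) * l v) *\<^sub>R v) = (1 - t) *\<^sub>R (\<Sum>v\<in>T. l v *\<^sub>R v)"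
      by (simp add: scaleR_sum_right)
    have b: "(\<Sum>v\<in>T. (t * unitv w v) *\<^sub>R v) = t *\<^sub>R (\<Sum>v\<in>T. unitv w v *\<^sub>R v)"
      by (simp add: scaleR_sum_right)
    show ?thesis using l s2 a b unfolding bcp_def by (simp add: scaleR_add_left sum.distrib)
  qed
  show ?thesis unfolding bcp_def using pos z s c by blast
qed

theorem proposition3p11:
  fixes Y :: "'a::euclidean_space set" and CC :: "'a set set" and v0 :: 'a
  assumes "bounded Y"
    and "simplicial_cover CC Y"
    and "v0 \<in> cover_vertices CC"
    and "\<forall>C\<in>CC. interior Y \<inter> interior C \<noteq> {}"
  shows "\<exists>x :: nat \<Rightarrow> 'a. (\<forall>i\<in>{1..card (cover_vertices CC - {v0}) + 1}. x i \<in> Y) \<and>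
           affinely_independent_family (card (cover_vertices CC - {v0}) + 1)
             (\<lambda>i v. bary_interp CC v (x i)) (cover_vertices CC - {v0})"
  
proof -
  define V where "V = cover_vertices CC"
  define G where "G x = (\<lambda>v. if v \<in> V then bary_interp CC v x else 0)" for x
  define Y0 where "Y0 = {x\<in>Y. \<exists>C\<in>CC. x \<in> interior C}"
  have cov: "simplicial_cover CC Y" by fact
  have finCC: "finite CC" using cov unfolding simplicial_cover_def by blast
  have simp: "\<And>C. C \<in> CC \<Longrightarrow> \<exists>T. \<not> affine_dependent T \<and> C = convex hull T"
    using cov unfolding simplicial_cover_def simplex_def by blast
  have KG: "G x = (\<lambda>v. bary_interp CC v x) \<and> bcp T x (G x)"
    if C: "C \<in> CC" and T: "\<not> affine_dependent T" "C = convex hull T" and x: "x \<in> interior C" for C T x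
  proof -
    have E: "extreme_points C = T" and B: "bcp T x (\<lambda>v. bary_interp CC v x)"
      using bary_interior[OF cov C T x] by auto
    have TV: "T \<subseteq> V" using E C unfolding V_def cover_vertices_def by blast
    have "G x = (\<lambda>v. bary_interp CC v x)"
      unfolding G_def fun_eq_iff using TV B unfolding bcp_def by auto
    then show ?thesis using B by simp
  qed
  have finV: "finite V"
    unfolding V_def cover_vertices_def
  proof (rule finite_UN_I[OF finCC])
    fix C assume "C \<in> CC"
    then obtain T where T: "\<not> affine_dependent T" "C = convex hull T" using simp by blast
    then have "extreme_points C = T"
      using extreme_point_of_convex_hull_affine_independent[OF T(1)] unfolding extreme_points_def by auto
    then show "finite (extreme_points C)" using T(1) aff_independent_finite by simp
  qed
  have span: "unitv v \<in> fv.span (G ` Y0)" if v: "v \<in> V" for v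
  proof -
    obtain C where C: "C \<in> CC" "v \<in> extreme_points C" using v unfolding V_def cover_vertices_def by blast
    obtain T where T: "\<not> affine_dependent T" "C = convex hull T" using simp C(1) by blast
    have finT: "finite T" using T(1) aff_independent_finite by blast
    have vT: "v \<in> T" using C(2) extreme_point_of_convex_hull_affine_independent[OF T(1)] T(2)
      unfolding extreme_points_def by auto
    obtain p where p: "p \<in> interior Y \<inter> interior C" using assms(4) C(1) by blast
    obtain r where r: "r > 0" "ball p r \<subseteq> interior Y \<inter> interior C"
      using p open_contains_ball[of "interior Y \<inter> interior C"] by blast
    define t where "t = min (1/2) (r / (2 * (norm (v - p) + 1)))"
    have d: "0 < 2 * (norm (v - p) + 1)" by (simp add: add_nonneg_pos)
    have t: "0 < t" "t < 1" using r d unfolding t_def by auto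
    define xt where "xt = (1 - t) *\<^sub>R p + t *\<^sub>R v"
    have "dist p xt = t * norm (v - p)"
      using t unfolding xt_def dist_norm by (simp add: algebra_simps norm_minus_commute flip: scaleR_diff_right)
    also have "\<dots> \<le> (r / (2 * (norm (v - p) + 1))) * norm (v - p)"
      unfolding t_def by (intro mult_right_mono) auto
    also have "\<dots> < r"
    proof -
      have "norm (v - p) / (2 * (norm (v - p) + 1)) < 1"
        using d by (simp add: divide_less_eq)
      then have "r * (norm (v - p) / (2 * (norm (v - p) + 1))) < r * 1"
        using r(1) by (intro mult_strict_left_mono) auto
      then show ?thesis by simp
    qed
    finally have xt: "xt \<in> interior Y \<inter> interior C" using r by auto
    have pY0: "p \<in> Y0" and xY0: "xt \<in> Y0" unfolding Y0_def
      using p xt C(1) interior_subset by blast+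
    have Gp: "bcp T p (G p)" using KG[OF C(1) T] p by blast
    have Gx: "bcp T xt (G xt)" using KG[OF C(1) T] xt by blast
    have "G xt = (\<lambda>u. (1 - t) * G p u + t * unitv v u)"
      using bcp_unique[OF T(1) Gx bcp_segment[OF Gp vT t finT, folded xt_def]] .
    then have "unitv v = fscale (1 / t) (G xt - fscale (1 - t) (G p))"
      using t unfolding fscale_def fun_eq_iff by (auto simp: field_simps)
    moreover have "G xt - fscale (1 - t) (G p) \<in> fv.span (G ` Y0)"
      by (intro fv.span_diff fv.span_scale fv.span_base) (use pY0 xY0 in auto)
    ultimately show ?thesis by (metis fv.span_scale)
  qed
  obtain B where B: "B \<subseteq> G ` Y0" "finite B" "card B = card V" "fv.independent B"
    using extract_basis[OF finV span] by blast
  have n: "card (cover_vertices CC - {v0}) + 1 = card V"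
  proof -
    have "v0 \<in> V" using assms(3) unfolding V_def .
    then have "card V > 0" using finV card_gt_0_iff by blast
    moreover have "card (V - {v0}) = card V - 1" using \<open>v0 \<in> V\<close> finV by simp
    ultimately show ?thesis unfolding V_def by simp
  qed
  obtain h where h: "bij_betw h {1..card V} B" using ex_bij_betw_nat_finite_1[OF B(2)] unfolding B(3) by blast
  define x where "x i = (SOME y. y \<in> Y0 \<and> G y = h i)" for i
  have x: "x i \<in> Y0 \<and> G (x i) = h i" if "i \<in> {1..card V}" for i
  proof -
    have "h i \<in> B" using bij_betwE[OF h] that by simp
    then have "h i \<in> G ` Y0" using B(1) by (rule subsetD[rotated])
    then obtain y where y: "y \<in> Y0" "h i = G y" by (rule imageE)
    then have "\<exists>y. y \<in> Y0 \<and> G y = h i" by (intro exI[of _ y]) simp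
    then show ?thesis unfolding x_def by (rule someI_ex)
  qed
  have sum1: "(\<Sum>v\<in>V. G y v) = 1" if yY0: "y \<in> Y0" for y
  proof -
    obtain C where C: "C \<in> CC" "y \<in> interior C" using yY0 unfolding Y0_def by blast
    obtain T where T: "\<not> affine_dependent T" "C = convex hull T" using simp C(1) by blast
    have b: "bcp T y (G y)" using KG[OF C(1) T C(2)] by blast
    have E: "extreme_points C = T" using bary_interior[OF cov C(1) T C(2)] by auto
    have TV: "T \<subseteq> V" using E C unfolding V_def cover_vertices_def by blast
    have "(\<Sum>v\<in>V. G y v) = (\<Sum>v\<in>T. G y v)"
      using b TV finV unfolding bcp_def by (intro sum.mono_neutral_right) auto
    then show ?thesis using b unfolding bcp_def by simp
  qed
  show ?thesis unfolding n
  proof (intro exI conjI)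
    show "\<forall>i\<in>{1..card V}. x i \<in> Y" using x unfolding Y0_def by blast
    show "affinely_independent_family (card V) (\<lambda>i v. bary_interp CC v (x i)) (cover_vertices CC - {v0})"
      unfolding affinely_independent_family_def
    proof (intro allI impI)
      fix c :: "nat \<Rightarrow> real"
      assume H: "(\<Sum>i = 1..card V. c i) = 0 \<and> (\<forall>j\<in>cover_vertices CC - {v0}. (\<Sum>i = 1..card V. c i * bary_interp CC j (x i)) = 0)"
      have Hj: "(\<Sum>i = 1..card V. c i * G (x i) j) = 0" if "j \<in> V - {v0}" for j
        using H that unfolding G_def V_def by auto
      have z: "(\<Sum>i = 1..card V. c i * G (x i) j) = 0" for j
      proof (cases "j \<in> V")
        case False then show ?thesis unfolding G_def by simp
      next
        case True
        show ?thesis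
        proof (cases "j = v0")
          case False then show ?thesis using Hj True by simp
        next
          case jv: True
          have "(\<Sum>i = 1..card V. c i * G (x i) j) = (\<Sum>i = 1..card V. c i * (1 - (\<Sum>u\<in>V - {v0}. G (x i) u)))"
          proof (rule sum.cong[OF refl])
            fix i assume i: "i \<in> {1..card V}"
            have "(\<Sum>u\<in>V. G (x i) u) = G (x i) v0 + (\<Sum>u\<in>V - {v0}. G (x i) u)"
              using finV True jv by (simp add: sum.remove)
            then show "c i * G (x i) j = c i * (1 - (\<Sum>u\<in>V - {v0}. G (x i) u))"
              using sum1[of "x i"] x[OF i] jv by simp
          qed
          also have "\<dots> = (\<Sum>i = 1..card V. c i) - (\<Sum>u\<in>V - {v0}. (\<Sum>i = 1..card V. c i * G (x i) u))"
            by (simp add: right_diff_distrib sum_subtractf sum_distrib_left sum.swap[of _ "V - {v0}"])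
          also have "\<dots> = 0" using H Hj by simp
          finally show ?thesis .
        qed
      qed
      have "(\<Sum>i = 1..card V. fscale (c i) (h i)) = 0"
        unfolding fun_eq_iff zero_fun_def sum_fun_apply fscale_def
      proof
        fix j
        have "(\<Sum>i = 1..card V. c i * h i j) = (\<Sum>i = 1..card V. c i * G (x i) j)"
          by (rule sum.cong[OF refl]) (use x in simp)
        then show "(\<Sum>i = 1..card V. c i * h i j) = 0" using z by simp
      qed
      moreover have "(\<Sum>b\<in>B. fscale (c (inv_into {1..card V} h b)) b)
          = (\<Sum>i = 1..card V. fscale (c (inv_into {1..card V} h (h i))) (h i))"
        by (rule sum.reindex_bij_betw[OF h, symmetric])
      moreover have "\<dots> = (\<Sum>i = 1..card V. fscale (c i) (h i))"
      proof (rule sum.cong[OF refl])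
        fix i assume "i \<in> {1..card V}"
        then have "inv_into {1..card V} h (h i) = i" by (rule bij_betw_inv_into_left[OF h])
        then show "fscale (c (inv_into {1..card V} h (h i))) (h i) = fscale (c i) (h i)" by simp
      qed
      ultimately have z2: "(\<Sum>b\<in>B. fscale (c (inv_into {1..card V} h b)) b) = 0" by simp
      show "\<forall>i\<in>{1..card V}. c i = 0"
      proof
        fix i assume i: "i \<in> {1..card V}"
        have "h i \<in> B" using bij_betwE[OF h] i by simp
        then have "c (inv_into {1..card V} h (h i)) = 0"
        proof -
          have all: "\<forall>S\<subseteq>B. finite S \<longrightarrow> (\<forall>u. (\<Sum>v\<in>S. fscale (u v) v) = 0 \<longrightarrow> (\<forall>v\<in>S. u v = 0))"
            using B(4) unfolding fv.independent_explicit_finite_subsets .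
          have allu: "\<forall>u. (\<Sum>v\<in>B. fscale (u v) v) = 0 \<longrightarrow> (\<forall>v\<in>B. u v = 0)"
            using spec[OF all, of B] B(2) by simp
          have "\<forall>v\<in>B. c (inv_into {1..card V} h v) = 0"
            using mp[OF spec[OF allu, of "\<lambda>b. c (inv_into {1..card V} h b)"]] z2 by simp
          then show ?thesis using \<open>h i \<in> B\<close> by simp
        qed
        then show "c i = 0" using bij_betw_inv_into_left[OF h i] by simp
      qed
    qed
  qed
qed

end
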